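(* Let $W$ be a random vector in $\mathbb R^p$ with $k\le\lambda_{\min}(E[WW^\top])$ and $\sup_{\|\Delta\|_2=1}\|\langle\Delta,W\rangle\|_{\psi_2}\le K$, and let $f:\mathbb R\to\mathbb R$ satisfy $|f(u)-f(v)|\le K\exp\{K(|u|+|v|)\}|u-v|$ for all $u,v$. Then there is a function $B_1:\mathbb R_+^5\to\mathbb R_+$, increasing in its first and in its second argument, such that for all $l\in\mathbb N$ and $\theta,\Delta\in\mathbb R^p$, $$E^{1/l}\{|f(\langle\theta+\Delta,W\rangle)-f(\langle\theta,W\rangle)|^l\}\le B_1(\|\theta\|_2,\|\Delta\|_2,l,k,K)\,E^{1/2}(\langle W,\Delta\rangle^2).$$
   Context: $k,K>0$ are constants. For a real random variable $U$, $\|U\|_{\psi_2}=\sup_{m\in\mathbb N}(E|U|^m)^{1/m}/\sqrt m$. *)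

theory Defs
  imports "HOL-Probability.Probability"
begin

definition psi2_norm :: "'a measure \<Rightarrow> ('a \<Rightarrow> real) \<Rightarrow> ereal" where
  "psi2_norm M U = (SUP m\<in>{1::nat..}.
     (if integrable M (\<lambda>x. \<bar>U x\<bar> ^ m)
      then ereal ((integral\<^sup>L M (\<lambda>x. \<bar>U x\<bar> ^ m)) powr (1 / real m) / sqrt (real m))
      else \<infinity>))"

definition second_moment :: "'a measure \<Rightarrow> ('a \<Rightarrow> real ^ 'p) \<Rightarrow> real ^ 'p ^ 'p" where
  "second_moment M W = (\<chi> i j. integral\<^sup>L M (\<lambda>x. W x $ i * W x $ j))"

definition lambda_min :: "real ^ 'p ^ 'p \<Rightarrow> real" where
  "lambda_min A = Inf {c. \<exists>v. v \<noteq> 0 \<and> A *v v = c *\<^sub>R v}"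

end

theory Submission
  imports Defs
begin


lemma exp_sums_real: "(\<lambda>n. x ^ n / fact n) sums exp (x::real)"
proof -
  have "(\<lambda>n. x ^ n /\<^sub>R fact n) = (\<lambda>n. x ^ n / fact n)"
    by (rule ext) (simp add: divide_inverse mult.commute)
  then show ?thesis using exp_converges[of x] by simp
qed

lemma pow_le_exp_fact: "real n ^ n / fact n \<le> exp (real n)"
proof -
  have s: "summable (\<lambda>i. real n ^ i / fact i)"
    using exp_sums_real[of "real n"] by (simp add: sums_iff)
  have "exp (real n) = (\<Sum>i. real n ^ i / fact i)"
    using exp_sums_real[of "real n"] by (simp add: sums_iff)
  moreover have "sum (\<lambda>i. real n ^ i / fact i) {n} \<le> (\<Sum>i. real n ^ i / fact i)"
    by (rule sum_le_suminf[OF s]) auto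
  ultimately show ?thesis by simp
qed

lemma exp_sq_bound:
  fixes Z :: "'a \<Rightarrow> real"
  assumes M: "prob_space M" and Zm: "Z \<in> borel_measurable M" and K: "K > 0"
    and mom: "\<And>m. m \<ge> 1 \<Longrightarrow> integrable M (\<lambda>x. \<bar>Z x\<bar> ^ m) \<and> integral\<^sup>L M (\<lambda>x. \<bar>Z x\<bar> ^ m) \<le> (K * sqrt (real m)) ^ m"
  shows "integrable M (\<lambda>x. exp (Z x ^ 2 / (4 * exp 1 * K ^ 2)))
    \<and> integral\<^sup>L M (\<lambda>x. exp (Z x ^ 2 / (4 * exp 1 * K ^ 2))) \<le> 2"
proof -
  interpret prob_space M by (rule M)
  define c where "c = 1 / (4 * exp 1 * K ^ 2)"
  have c0: "c > 0" using K by (simp add: c_def)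
  have ck: "c * K^2 * 2 = 1 / (2 * exp 1)" using K by (simp add: c_def)
  have int2: "integrable M (\<lambda>x. (c * Z x ^ 2) ^ n / fact n)" for n
  proof (cases "n = 0")
    case True then show ?thesis by simp
  next
    case False
    have "integrable M (\<lambda>x. \<bar>Z x\<bar> ^ (2*n))" using mom[of "2*n"] False by simp
    then have "integrable M (\<lambda>x. (c ^ n / fact n) * \<bar>Z x\<bar> ^ (2*n))" by simp
    then show ?thesis
      by (rule back_subst[where P="integrable M"]) (auto simp: power_mult_distrib power_mult power2_abs)
  qed
  have tb: "integral\<^sup>L M (\<lambda>x. (c * Z x ^ 2) ^ n / fact n) \<le> (1/2) ^ n" for n
  proof (cases "n = 0")
    case True then show ?thesis by simp
  next
    case False
    have eq: "integral\<^sup>L M (\<lambda>x. (c * Z x ^ 2) ^ n / fact n) = (c ^ n / fact n) * integral\<^sup>L M (\<lambda>x. \<bar>Z x\<bar> ^ (2*n))"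
      by (simp add: power_mult_distrib power_mult power2_abs)
    have "integral\<^sup>L M (\<lambda>x. \<bar>Z x\<bar> ^ (2*n)) \<le> (K * sqrt (real (2*n))) ^ (2*n)" using mom[of "2*n"] False by simp
    also have "\<dots> = K ^ (2*n) * (2 * real n) ^ n"
      by (simp add: power_mult_distrib power_mult)
    finally have b: "integral\<^sup>L M (\<lambda>x. \<bar>Z x\<bar> ^ (2*n)) \<le> K ^ (2*n) * (2 * real n) ^ n" .
    have "(c ^ n / fact n) * integral\<^sup>L M (\<lambda>x. \<bar>Z x\<bar> ^ (2*n)) \<le> (c ^ n / fact n) * (K ^ (2*n) * (2 * real n) ^ n)"
      by (rule mult_left_mono[OF b]) (use c0 in auto)
    also have "\<dots> = (c * K^2 * 2) ^ n * (real n ^ n / fact n)"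
      by (simp add: power_mult_distrib power_mult)
    also have "\<dots> = (1 / (2 * exp 1)) ^ n * (real n ^ n / fact n)"
      using ck by simp
    also have "\<dots> \<le> (1 / (2 * exp 1)) ^ n * exp (real n)"
      by (rule mult_left_mono[OF pow_le_exp_fact]) auto
    also have "\<dots> = (1/2) ^ n"
      by (simp add: exp_of_nat_mult[symmetric] power_mult_distrib field_simps)
    finally show ?thesis using eq by simp
  qed
  have expeq: "exp (c * Z x ^ 2) = (\<Sum>n. (c * Z x ^ 2) ^ n / fact n)" for x
    using exp_sums_real[of "c * Z x ^ 2"] by (simp add: sums_iff)
  have summ: "summable (\<lambda>n. (c * Z x ^ 2) ^ n / fact n)" for x
    using exp_sums_real[of "c * Z x ^ 2"] by (simp add: sums_iff)
  have "(\<integral>\<^sup>+x. ennreal (exp (c * Z x ^ 2)) \<partial>M) = (\<integral>\<^sup>+x. (\<Sum>n. ennreal ((c * Z x ^ 2) ^ n / fact n)) \<partial>M)"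
  proof (intro nn_integral_cong)
    fix x
    have nn: "0 \<le> (c * Z x ^ 2) ^ n / fact n" for n
    proof -
      have "0 \<le> c * Z x ^ 2" using c0 by simp
      then show ?thesis by simp
    qed
    show "ennreal (exp (c * Z x ^ 2)) = (\<Sum>n. ennreal ((c * Z x ^ 2) ^ n / fact n))"
      by (subst expeq, rule suminf_ennreal2[symmetric, OF nn summ])
  qed
  also have "\<dots> = (\<Sum>n. \<integral>\<^sup>+x. ennreal ((c * Z x ^ 2) ^ n / fact n) \<partial>M)"
    by (rule nn_integral_suminf) (use Zm in measurable)
  also have "\<dots> = (\<Sum>n. ennreal (integral\<^sup>L M (\<lambda>x. (c * Z x ^ 2) ^ n / fact n)))"
    by (intro suminf_cong nn_integral_eq_integral int2) (auto intro!: AE_I2 simp: c0 less_imp_le)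
  also have "\<dots> \<le> (\<Sum>n. ennreal ((1/2) ^ n))"
    by (intro suminf_le tb ennreal_leI) auto
  also have "\<dots> = ennreal 2"
    by (subst suminf_ennreal2) (auto simp: suminf_geometric)
  finally have fin: "(\<integral>\<^sup>+x. ennreal (exp (c * Z x ^ 2)) \<partial>M) \<le> ennreal 2" .
  then have "(\<integral>\<^sup>+x. ennreal (exp (c * Z x ^ 2)) \<partial>M) < top"
    using ennreal_less_top[of 2] by (rule le_less_trans)
  then obtain r where r: "(\<integral>\<^sup>+x. ennreal (exp (c * Z x ^ 2)) \<partial>M) = ennreal r"
    unfolding less_top_ennreal by auto
  have I: "integrable M (\<lambda>x. exp (c * Z x ^ 2))"
    by (rule integrableI_nn_integral_finite[OF _ _ r(1)]) (use Zm in auto)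
  have "ennreal (integral\<^sup>L M (\<lambda>x. exp (c * Z x ^ 2))) \<le> ennreal 2"
    using fin by (subst nn_integral_eq_integral[OF I, symmetric]) auto
  then have "integral\<^sup>L M (\<lambda>x. exp (c * Z x ^ 2)) \<le> 2"
    by (subst (asm) ennreal_le_iff) auto
  moreover have "(\<lambda>x. exp (Z x ^ 2 / (4 * exp 1 * K ^ 2))) = (\<lambda>x. exp (c * Z x ^ 2))"
    by (simp add: c_def)
  ultimately show ?thesis using I by simp
qed


lemma psi2_mom:
  assumes P: "psi2_norm M U \<le> ereal K" and m: "m \<ge> 1"
  shows "integrable M (\<lambda>x. \<bar>U x\<bar> ^ m) \<and> integral\<^sup>L M (\<lambda>x. \<bar>U x\<bar> ^ m) \<le> (K * sqrt (real m)) ^ m"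
proof -
  let ?t = "(if integrable M (\<lambda>x. \<bar>U x\<bar> ^ m)
      then ereal ((integral\<^sup>L M (\<lambda>x. \<bar>U x\<bar> ^ m)) powr (1 / real m) / sqrt (real m))
      else \<infinity>)"
  have "?t \<le> psi2_norm M U" unfolding psi2_norm_def
    by (rule SUP_upper) (use m in auto)
  then have t: "?t \<le> ereal K" using P by (rule order.trans)
  then have I: "integrable M (\<lambda>x. \<bar>U x\<bar> ^ m)" by (cases "integrable M (\<lambda>x. \<bar>U x\<bar> ^ m)") auto
  define J where "J = integral\<^sup>L M (\<lambda>x. \<bar>U x\<bar> ^ m)"
  have J0: "J \<ge> 0" unfolding J_def by (rule integral_nonneg_AE) auto
  have "J powr (1 / real m) / sqrt (real m) \<le> K" using t I by (simp add: J_def)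
  then have b: "J powr (1 / real m) \<le> K * sqrt (real m)" using m by (simp add: divide_le_eq)
  have "J = (J powr (1 / real m)) ^ m"
  proof (cases "J = 0")
    case True then show ?thesis using m by simp
  next
    case False
    then have "J > 0" using J0 by simp
    then have "(J powr (1 / real m)) ^ m = (J powr (1 / real m)) powr (real m)"
      by (simp add: powr_realpow)
    also have "\<dots> = J" using m J0 by (simp add: powr_powr)
    finally show ?thesis by simp
  qed
  also have "\<dots> \<le> (K * sqrt (real m)) ^ m"
    by (rule power_mono[OF b]) simp
  finally show ?thesis using I by (simp add: J_def)
qed

lemma amgm: "(\<alpha>::real) > 0 \<Longrightarrow> a * b \<le> \<alpha> * a ^ 2 + b ^ 2 / (4 * \<alpha>)"
proof -
  assume a: "\<alpha> > 0"
  have eq: "\<alpha> * a ^ 2 + b ^ 2 / (4 * \<alpha>) - a * b = (2 * \<alpha> * a - b) ^ 2 / (4 * \<alpha>)"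
    using a by (simp add: field_simps power2_eq_square)
  have "0 \<le> (2 * \<alpha> * a - b) ^ 2 / (4 * \<alpha>)" using a by simp
  then show ?thesis using eq by linarith
qed



lemma vec_mom:
  fixes W :: "'a \<Rightarrow> real ^ 'p"
  assumes M: "prob_space M"
    and momu: "\<And>u m. norm u = 1 \<Longrightarrow> m \<ge> 1 \<Longrightarrow> integrable M (\<lambda>x. \<bar>u \<bullet> W x\<bar> ^ m) \<and>
        integral\<^sup>L M (\<lambda>x. \<bar>u \<bullet> W x\<bar> ^ m) \<le> (K * sqrt (real m)) ^ m"
    and m: "m \<ge> 1" and K: "K > 0"
  shows "integrable M (\<lambda>x. \<bar>v \<bullet> W x\<bar> ^ m) \<and>
        integral\<^sup>L M (\<lambda>x. \<bar>v \<bullet> W x\<bar> ^ m) \<le> (K * norm v * sqrt (real m)) ^ m"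
proof (cases "v = 0")
  case True then show ?thesis using m by (simp add: zero_power)
next
  case False
  define u where "u = (1 / norm v) *\<^sub>R v"
  have nu: "norm u = 1" using False by (simp add: u_def)
  have eq: "\<bar>v \<bullet> W x\<bar> ^ m = norm v ^ m * \<bar>u \<bullet> W x\<bar> ^ m" for x
    using False by (simp add: u_def abs_mult power_mult_distrib[symmetric])
  have I: "integrable M (\<lambda>x. \<bar>u \<bullet> W x\<bar> ^ m)" and b: "integral\<^sup>L M (\<lambda>x. \<bar>u \<bullet> W x\<bar> ^ m) \<le> (K * sqrt (real m)) ^ m"
    using momu[OF nu m] by auto
  have "integral\<^sup>L M (\<lambda>x. \<bar>v \<bullet> W x\<bar> ^ m) = norm v ^ m * integral\<^sup>L M (\<lambda>x. \<bar>u \<bullet> W x\<bar> ^ m)"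
    by (simp add: eq)
  also have "\<dots> \<le> norm v ^ m * (K * sqrt (real m)) ^ m"
    by (rule mult_left_mono[OF b]) simp
  also have "\<dots> = (K * norm v * sqrt (real m)) ^ m"
    by (simp add: power_mult_distrib)
  finally show ?thesis using I by (simp add: eq)
qed

lemma exp_abs_bound:
  fixes W :: "'a \<Rightarrow> real ^ 'p"
  assumes M: "prob_space M" and Wm: "W \<in> borel_measurable M"
    and momu: "\<And>u m. norm u = 1 \<Longrightarrow> m \<ge> 1 \<Longrightarrow> integrable M (\<lambda>x. \<bar>u \<bullet> W x\<bar> ^ m) \<and>
        integral\<^sup>L M (\<lambda>x. \<bar>u \<bullet> W x\<bar> ^ m) \<le> (K * sqrt (real m)) ^ m"
    and K: "K > 0" and s: "s \<ge> 0"
  shows "integrable M (\<lambda>x. exp (s * \<bar>v \<bullet> W x\<bar>)) \<and>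
        integral\<^sup>L M (\<lambda>x. exp (s * \<bar>v \<bullet> W x\<bar>)) \<le> 2 * exp (exp 1 * K ^ 2 * s ^ 2 * norm v ^ 2)"
proof (cases "v = 0")
  case True
  interpret prob_space M by (rule M)
  show ?thesis using True by (simp add: prob_space)
next
  case False
  interpret prob_space M by (rule M)
  define u where "u = (1 / norm v) *\<^sub>R v"
  have nu: "norm u = 1" using False by (simp add: u_def)
  have Zm: "(\<lambda>x. u \<bullet> W x) \<in> borel_measurable M" using Wm by measurable
  have G: "integrable M (\<lambda>x. exp ((u \<bullet> W x) ^ 2 / (4 * exp 1 * K ^ 2)))
    \<and> integral\<^sup>L M (\<lambda>x. exp ((u \<bullet> W x) ^ 2 / (4 * exp 1 * K ^ 2))) \<le> 2"
    by (rule exp_sq_bound[OF M Zm K]) (use momu[OF nu] in auto)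
  define C where "C = exp (exp 1 * K ^ 2 * s ^ 2 * norm v ^ 2)"
  have pw: "exp (s * \<bar>v \<bullet> W x\<bar>) \<le> C * exp ((u \<bullet> W x) ^ 2 / (4 * exp 1 * K ^ 2))" for x
  proof -
    have vu: "\<bar>v \<bullet> W x\<bar> = norm v * \<bar>u \<bullet> W x\<bar>"
      using False by (simp add: u_def abs_mult)
    have "(s * norm v) * \<bar>u \<bullet> W x\<bar> \<le> (exp 1 * K ^ 2) * (s * norm v) ^ 2 + \<bar>u \<bullet> W x\<bar> ^ 2 / (4 * (exp 1 * K ^ 2))"
      by (rule amgm) (use K in simp)
    then have "s * \<bar>v \<bullet> W x\<bar> \<le> exp 1 * K ^ 2 * s ^ 2 * norm v ^ 2 + (u \<bullet> W x) ^ 2 / (4 * exp 1 * K ^ 2)"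
      by (simp add: vu power_mult_distrib mult.assoc mult.left_commute)
    then have "exp (s * \<bar>v \<bullet> W x\<bar>) \<le> exp (exp 1 * K ^ 2 * s ^ 2 * norm v ^ 2 + (u \<bullet> W x) ^ 2 / (4 * exp 1 * K ^ 2))"
      by simp
    then show ?thesis by (simp add: C_def exp_add)
  qed
  have C0: "C > 0" by (simp add: C_def)
  have I2: "integrable M (\<lambda>x. C * exp ((u \<bullet> W x) ^ 2 / (4 * exp 1 * K ^ 2)))"
    using G by simp
  have I: "integrable M (\<lambda>x. exp (s * \<bar>v \<bullet> W x\<bar>))"
    by (rule Bochner_Integration.integrable_bound[OF I2]) (use Wm pw C0 in \<open>auto intro!: AE_I2 simp: abs_mult\<close>)
  have "integral\<^sup>L M (\<lambda>x. exp (s * \<bar>v \<bullet> W x\<bar>)) \<le> integral\<^sup>L M (\<lambda>x. C * exp ((u \<bullet> W x) ^ 2 / (4 * exp 1 * K ^ 2)))"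
    by (rule integral_mono[OF I I2 pw])
  also have "\<dots> = C * integral\<^sup>L M (\<lambda>x. exp ((u \<bullet> W x) ^ 2 / (4 * exp 1 * K ^ 2)))" by simp
  also have "\<dots> \<le> C * 2" using G by (intro mult_left_mono) (auto simp: C_def)
  finally show ?thesis using I by (simp add: C_def mult.commute)
qed



lemma quad_zero:
  fixes \<beta> \<gamma> :: real
  assumes "\<And>t. 0 \<le> 2 * t * \<beta> + t ^ 2 * \<gamma>" and "\<gamma> \<ge> 0"
  shows "\<beta> = 0"
proof -
  define t where "t = - \<beta> / (\<gamma> + 1)"
  have g: "\<gamma> + 1 > 0" using assms(2) by simp
  have "0 \<le> 2 * t * \<beta> + t ^ 2 * \<gamma>" by (rule assms(1))
  then have "0 \<le> (\<gamma> + 1)^2 * (2 * t * \<beta> + t ^ 2 * \<gamma>)" using g by simp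
  also have "(\<gamma> + 1)^2 * (2 * t * \<beta> + t ^ 2 * \<gamma>) = 2 * \<beta> * (t * (\<gamma> + 1)) * (\<gamma> + 1) + (t * (\<gamma> + 1))^2 * \<gamma>"
    by (simp add: power2_eq_square algebra_simps)
  also have "t * (\<gamma> + 1) = - \<beta>" using g by (simp add: t_def)
  also have "2 * \<beta> * (- \<beta>) * (\<gamma> + 1) + (- \<beta>)^2 * \<gamma> = - (\<beta> ^ 2 * (\<gamma> + 2))"
    by (simp add: power2_eq_square algebra_simps)
  finally have "\<beta> ^ 2 * (\<gamma> + 2) \<le> 0" by simp
  then have "\<beta> ^ 2 \<le> 0" using assms(2) by (simp add: mult_le_0_iff)
  then show ?thesis by simp
qed

lemma min_eig:
  fixes A :: "real ^ 'p ^ 'p"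
  assumes sym: "\<And>x y. x \<bullet> (A *v y) = y \<bullet> (A *v x)"
    and k: "k \<le> lambda_min A"
  shows "k * norm v ^ 2 \<le> v \<bullet> (A *v v)"
proof -
  define Q where "Q x = x \<bullet> (A *v x)" for x
  have cont: "continuous_on (sphere 0 1) Q"
    unfolding Q_def by (intro continuous_intros bounded_linear.continuous_on[OF matrix_vector_mul_bounded_linear])
  have ne: "sphere (0::real^'p) 1 \<noteq> {}"
    using vector_choose_size[of 1] by (auto simp: sphere_def)
  obtain u where u: "u \<in> sphere 0 1" and umin: "\<And>y. y \<in> sphere 0 1 \<Longrightarrow> Q u \<le> Q y"
    using continuous_attains_inf[OF compact_sphere ne cont] by blast
  define \<mu> where "\<mu> = Q u"
  have nu: "norm u = 1" using u by simp
  have lin: "A *v (x + y) = A *v x + A *v y" "A *v (c *\<^sub>R x) = c *\<^sub>R (A *v x)" for x y c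
    by (simp_all add: matrix_vector_right_distrib matrix_vector_mult_scaleR)
  have hom: "Q (c *\<^sub>R x) = c^2 * Q x" for c x
    by (simp add: Q_def lin power2_eq_square)
  have R: "\<mu> * norm y ^ 2 \<le> Q y" for y
  proof (cases "y = 0")
    case True then show ?thesis by (simp add: Q_def)
  next
    case False
    have "\<mu> \<le> Q ((1 / norm y) *\<^sub>R y)" unfolding \<mu>_def
      by (rule umin) (use False in simp)
    also have "\<dots> = Q y / norm y ^ 2" by (simp add: hom power_divide)
    finally show ?thesis using False by (simp add: field_simps)
  qed
  define w where "w = A *v u - \<mu> *\<^sub>R u"
  have exp: "Q (u + t *\<^sub>R w) - \<mu> * norm (u + t *\<^sub>R w) ^ 2
      = 2 * t * (w \<bullet> w) + t^2 * (Q w - \<mu> * norm w ^ 2)" for t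
  proof -
    have "Q (u + t *\<^sub>R w) = Q u + t * (u \<bullet> (A *v w)) + t * (w \<bullet> (A *v u)) + t^2 * Q w"
      by (simp add: Q_def lin inner_add_left inner_add_right power2_eq_square algebra_simps)
    also have "u \<bullet> (A *v w) = w \<bullet> (A *v u)" by (rule sym)
    finally have q: "Q (u + t *\<^sub>R w) = Q u + 2 * t * (w \<bullet> (A *v u)) + t^2 * Q w" by simp
    have n: "norm (u + t *\<^sub>R w) ^ 2 = 1 + 2 * t * (w \<bullet> u) + t^2 * norm w ^ 2"
    proof -
      have uu: "u \<bullet> u = 1" using nu by (simp add: power2_norm_eq_inner[symmetric])
      have "norm (u + t *\<^sub>R w) ^ 2 = (u + t *\<^sub>R w) \<bullet> (u + t *\<^sub>R w)" by (rule power2_norm_eq_inner)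
      also have "\<dots> = u \<bullet> u + 2 * t * (w \<bullet> u) + t^2 * (w \<bullet> w)"
        by (simp add: inner_add_left inner_add_right inner_commute power2_eq_square algebra_simps)
      finally show ?thesis using uu by (simp add: power2_norm_eq_inner)
    qed
    have ww: "w \<bullet> (A *v u) = w \<bullet> w + \<mu> * (w \<bullet> u)"
      by (simp add: w_def inner_diff_right)
    show ?thesis unfolding q n ww by (simp add: \<mu>_def algebra_simps)
  qed
  have "w \<bullet> w = 0"
  proof (rule quad_zero)
    fix t
    show "0 \<le> 2 * t * (w \<bullet> w) + t^2 * (Q w - \<mu> * norm w ^ 2)"
      using R[of "u + t *\<^sub>R w"] exp[of t] by simp
    show "0 \<le> Q w - \<mu> * norm w ^ 2" using R[of w] by simp
  qed
  then have eig: "A *v u = \<mu> *\<^sub>R u" by (simp add: w_def)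
  define S where "S = {c. \<exists>v. v \<noteq> 0 \<and> A *v v = c *\<^sub>R v}"
  have muS: "\<mu> \<in> S" unfolding S_def using eig nu by (intro CollectI exI[of _ u]) auto
  have bdd: "bdd_below S"
  proof (rule bdd_belowI)
    fix c assume "c \<in> S"
    then obtain y where y: "y \<noteq> 0" "A *v y = c *\<^sub>R y" by (auto simp: S_def)
    have "\<mu> * norm y ^ 2 \<le> Q y" by (rule R)
    also have "Q y = c * norm y ^ 2" using y by (simp add: Q_def power2_norm_eq_inner)
    finally show "\<mu> \<le> c" using y by simp
  qed
  have "lambda_min A \<le> \<mu>" unfolding lambda_min_def S_def[symmetric]
    by (rule cInf_lower[OF muS bdd])
  with k have "k \<le> \<mu>" by simp
  then have "k * norm v ^ 2 \<le> \<mu> * norm v ^ 2" by (simp add: mult_right_mono)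
  also have "\<dots> \<le> Q v" by (rule R)
  finally show ?thesis by (simp add: Q_def)
qed



lemma abs_prod_le_sq: "\<bar>(a::real) * b\<bar> \<le> a\<^sup>2 + b\<^sup>2"
proof -
  have "0 \<le> (\<bar>a\<bar> - \<bar>b\<bar>)\<^sup>2" by simp
  then have "2 * (\<bar>a\<bar> * \<bar>b\<bar>) \<le> \<bar>a\<bar>\<^sup>2 + \<bar>b\<bar>\<^sup>2" by (simp add: power2_diff)
  moreover have "0 \<le> \<bar>a\<bar> * \<bar>b\<bar>" by simp
  moreover have "\<bar>a\<bar>\<^sup>2 = a\<^sup>2" "\<bar>b\<bar>\<^sup>2 = b\<^sup>2" by simp_all
  ultimately have "\<bar>a\<bar> * \<bar>b\<bar> \<le> a\<^sup>2 + b\<^sup>2" by linarith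
  then show ?thesis by (simp add: abs_mult)
qed

lemma second_moment_quad:
  fixes W :: "'a \<Rightarrow> real ^ 'p"
  assumes M: "prob_space M" and Wm: "W \<in> borel_measurable M"
    and sq: "\<And>v. integrable M (\<lambda>x. (v \<bullet> W x) ^ 2)"
  shows "v \<bullet> (second_moment M W *v v) = integral\<^sup>L M (\<lambda>x. (W x \<bullet> v) ^ 2)"
    and "x \<bullet> (second_moment M W *v y) = y \<bullet> (second_moment M W *v x)"
proof -
  have comp: "W x $ i = axis i 1 \<bullet> W x" for x i
    by (simp add: cart_eq_inner_axis inner_commute)
  have sqi: "integrable M (\<lambda>x. (W x $ i) ^ 2)" for i
    unfolding comp by (rule sq)
  have Wi: "(\<lambda>x. W x $ i) \<in> borel_measurable M" for i
    unfolding comp using Wm by measurable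
  have int: "integrable M (\<lambda>x. W x $ i * W x $ j)" for i j
  proof (rule Bochner_Integration.integrable_bound[OF Bochner_Integration.integrable_add[OF sqi[of i] sqi[of j]]])
    show "(\<lambda>x. W x $ i * W x $ j) \<in> borel_measurable M" using Wi by measurable
    show "AE x in M. norm (W x $ i * W x $ j) \<le> norm ((W x $ i)\<^sup>2 + (W x $ j)\<^sup>2)"
    proof (rule AE_I2)
      fix x
      have "\<bar>W x $ i * W x $ j\<bar> \<le> (W x $ i)\<^sup>2 + (W x $ j)\<^sup>2"
        by (rule abs_prod_le_sq)
      then show "norm (W x $ i * W x $ j) \<le> norm ((W x $ i)\<^sup>2 + (W x $ j)\<^sup>2)" by simp
    qed
  qed
  define A where "A = second_moment M W"
  have Aij: "A $ i $ j = integral\<^sup>L M (\<lambda>x. W x $ i * W x $ j)" for i j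
    by (simp add: A_def second_moment_def)
  have "v \<bullet> (A *v v) = (\<Sum>i\<in>UNIV. \<Sum>j\<in>UNIV. v $ i * v $ j * A $ i $ j)"
    by (simp add: inner_vec_def matrix_vector_mult_def sum_distrib_left algebra_simps)
  also have "\<dots> = (\<Sum>i\<in>UNIV. \<Sum>j\<in>UNIV. integral\<^sup>L M (\<lambda>x. v $ i * v $ j * (W x $ i * W x $ j)))"
    by (simp add: Aij)
  also have "\<dots> = integral\<^sup>L M (\<lambda>x. \<Sum>i\<in>UNIV. \<Sum>j\<in>UNIV. v $ i * v $ j * (W x $ i * W x $ j))"
    using int by (simp add: integral_sum integrable_sum)
  also have "\<dots> = integral\<^sup>L M (\<lambda>x. (W x \<bullet> v) ^ 2)"
  proof (rule Bochner_Integration.integral_cong[OF refl])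
    fix x
    show "(\<Sum>i\<in>UNIV. \<Sum>j\<in>UNIV. v $ i * v $ j * (W x $ i * W x $ j)) = (W x \<bullet> v) ^ 2"
      by (simp add: inner_vec_def power2_eq_square sum_product algebra_simps)
  qed
  finally show "v \<bullet> (second_moment M W *v v) = integral\<^sup>L M (\<lambda>x. (W x \<bullet> v) ^ 2)" by (simp add: A_def)
  have symA: "A $ i $ j = A $ j $ i" for i j by (simp add: Aij mult.commute)
  have "x \<bullet> (A *v y) = (\<Sum>i\<in>UNIV. \<Sum>j\<in>UNIV. x $ i * y $ j * A $ i $ j)"
    by (simp add: inner_vec_def matrix_vector_mult_def sum_distrib_left algebra_simps)
  also have "\<dots> = (\<Sum>j\<in>UNIV. \<Sum>i\<in>UNIV. x $ i * y $ j * A $ j $ i)"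
    by (subst sum.swap) (simp add: symA)
  also have "\<dots> = y \<bullet> (A *v x)"
    by (simp add: inner_vec_def matrix_vector_mult_def sum_distrib_left algebra_simps)
  finally show "x \<bullet> (second_moment M W *v y) = y \<bullet> (second_moment M W *v x)" by (simp add: A_def)
qed



lemma f_cont:
  fixes f :: "real \<Rightarrow> real"
  assumes K: "K > 0" and L: "\<And>u v. \<bar>f u - f v\<bar> \<le> K * exp (K * (\<bar>u\<bar> + \<bar>v\<bar>)) * \<bar>u - v\<bar>"
  shows "isCont f x"
proof -
  define C where "C = K * exp (K * (2 * \<bar>x\<bar> + 1))"
  have C0: "C > 0" using K by (simp add: C_def)
  show ?thesis unfolding isCont_def LIM_eq
  proof (intro allI impI)
    fix r :: real assume r: "r > 0"
    show "\<exists>s>0. \<forall>y. y \<noteq> x \<and> norm (y - x) < s \<longrightarrow> norm (f y - f x) < r"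
    proof (intro exI[of _ "min 1 (r / C)"] conjI allI impI)
      show "min 1 (r / C) > 0" using r C0 by simp
      fix y assume y: "y \<noteq> x \<and> norm (y - x) < min 1 (r / C)"
      have yx: "\<bar>y - x\<bar> < 1" "\<bar>y - x\<bar> < r / C" using y by auto
      have "\<bar>y\<bar> + \<bar>x\<bar> \<le> 2 * \<bar>x\<bar> + 1" using yx by linarith
      then have "K * exp (K * (\<bar>y\<bar> + \<bar>x\<bar>)) \<le> C" using K by (simp add: C_def)
      then have "\<bar>f y - f x\<bar> \<le> C * \<bar>y - x\<bar>"
        using L[of y x] by (meson abs_ge_zero mult_right_mono order.trans)
      also have "\<dots> < C * (r / C)" using yx C0 by (intro mult_strict_left_mono) auto
      also have "\<dots> = r" using C0 by simp
      finally show "norm (f y - f x) < r" by simp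
    qed
  qed
qed



lemma core:
  fixes W :: "'a \<Rightarrow> real ^ 'p" and f :: "real \<Rightarrow> real" and \<theta> \<Delta> :: "real ^ 'p"
  assumes M: "prob_space M" and Wm: "W \<in> borel_measurable M" and K: "K > 0" and k0: "k > 0"
    and L: "\<And>u v. \<bar>f u - f v\<bar> \<le> K * exp (K * (\<bar>u\<bar> + \<bar>v\<bar>)) * \<bar>u - v\<bar>"
    and vm: "\<And>v m. m \<ge> 1 \<Longrightarrow> integrable M (\<lambda>x. \<bar>v \<bullet> W x\<bar> ^ m) \<and>
        integral\<^sup>L M (\<lambda>x. \<bar>v \<bullet> W x\<bar> ^ m) \<le> (K * norm v * sqrt (real m)) ^ m"
    and eb: "\<And>v s. s \<ge> 0 \<Longrightarrow> integrable M (\<lambda>x. exp (s * \<bar>v \<bullet> W x\<bar>)) \<and>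
        integral\<^sup>L M (\<lambda>x. exp (s * \<bar>v \<bullet> W x\<bar>)) \<le> 2 * exp (exp 1 * K ^ 2 * s ^ 2 * norm v ^ 2)"
    and quad: "\<And>v. k * norm v ^ 2 \<le> integral\<^sup>L M (\<lambda>x. (W x \<bullet> v) ^ 2)"
    and fm: "f \<in> borel_measurable borel"
    and l: "l \<ge> 1"
  shows "integrable M (\<lambda>x. \<bar>f ((\<theta> + \<Delta>) \<bullet> W x) - f (\<theta> \<bullet> W x)\<bar> ^ l) \<and>
        (integral\<^sup>L M (\<lambda>x. \<bar>f ((\<theta> + \<Delta>) \<bullet> W x) - f (\<theta> \<bullet> W x)\<bar> ^ l)) powr (1 / real l)
          \<le> (K powr real l * (2 * exp (64 * exp 1 * K ^ 4 * (real l) ^ 2 * (norm \<theta> ^ 2 + norm \<Delta> ^ 2))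
        + K powr (2 * real l) * (2 * real l) powr real l) / 2) powr (1 / real l) / sqrt k
             * sqrt (integral\<^sup>L M (\<lambda>x. (W x \<bullet> \<Delta>)\<^sup>2))"
proof -
  interpret prob_space M by (rule M)
  define C where "C = (K powr real l * (2 * exp (64 * exp 1 * K ^ 4 * (real l) ^ 2 * (norm \<theta> ^ 2 + norm \<Delta> ^ 2))
        + K powr (2 * real l) * (2 * real l) powr real l) / 2)"
  define q where "q = integral\<^sup>L M (\<lambda>x. (W x \<bullet> \<Delta>)\<^sup>2)"
  have C0: "C \<ge> 0" by (simp add: C_def)
  have q0: "q \<ge> 0" unfolding q_def by (rule integral_nonneg_AE) auto
  have RHS0: "0 \<le> C powr (1 / real l) / sqrt k * sqrt q" using q0 k0 by simp
  have Phim: "(\<lambda>x. \<bar>f ((\<theta> + \<Delta>) \<bullet> W x) - f (\<theta> \<bullet> W x)\<bar> ^ l) \<in> borel_measurable M"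
    using Wm fm by measurable
  show ?thesis
  proof (cases "\<Delta> = 0")
    case True
    then show ?thesis using l RHS0 by (simp add: zero_power C_def q_def)
  next
    case False
    define nd where "nd = norm \<Delta>"
    have nd0: "nd > 0" using False by (simp add: nd_def)
    define t where "t = nd ^ l"
    have t0: "t > 0" using nd0 by (simp add: t_def)
    define X where "X x = \<theta> \<bullet> W x" for x
    define D where "D x = \<Delta> \<bullet> W x" for x
    define s1 where "s1 = 8 * real l * K"
    define s2 where "s2 = 4 * real l * K"
    define G where "G x = K ^ l * ((t / 2) * ((exp (s1 * \<bar>X x\<bar>) + exp (s2 * \<bar>D x\<bar>)) / 2) + \<bar>D x\<bar> ^ (2 * l) / (2 * t))" for x
    have pw: "\<bar>f ((\<theta> + \<Delta>) \<bullet> W x) - f (\<theta> \<bullet> W x)\<bar> ^ l \<le> G x" for x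
    proof -
      define u where "u = X x"
      define d where "d = D x"
      have sum: "(\<theta> + \<Delta>) \<bullet> W x = u + d" by (simp add: u_def d_def X_def D_def inner_add_left)
      have "\<bar>f (u + d) - f u\<bar> \<le> K * exp (K * (\<bar>u + d\<bar> + \<bar>u\<bar>)) * \<bar>u + d - u\<bar>" by (rule L)
      also have "\<dots> \<le> K * exp (K * (2 * \<bar>u\<bar> + \<bar>d\<bar>)) * \<bar>d\<bar>"
      proof -
        have "\<bar>u + d\<bar> + \<bar>u\<bar> \<le> 2 * \<bar>u\<bar> + \<bar>d\<bar>" by linarith
        then have "exp (K * (\<bar>u + d\<bar> + \<bar>u\<bar>)) \<le> exp (K * (2 * \<bar>u\<bar> + \<bar>d\<bar>))" using K by simp
        then show ?thesis using K by (simp add: mult_right_mono)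
      qed
      finally have b1: "\<bar>f (u + d) - f u\<bar> \<le> K * exp (K * (2 * \<bar>u\<bar> + \<bar>d\<bar>)) * \<bar>d\<bar>" .
      define a where "a = exp (real l * (K * (2 * \<bar>u\<bar> + \<bar>d\<bar>)))"
      define b where "b = \<bar>d\<bar> ^ l"
      have "\<bar>f (u + d) - f u\<bar> ^ l \<le> (K * exp (K * (2 * \<bar>u\<bar> + \<bar>d\<bar>)) * \<bar>d\<bar>) ^ l"
        by (rule power_mono[OF b1]) simp
      also have "\<dots> = K ^ l * (a * b)"
        by (simp add: a_def b_def power_mult_distrib exp_of_nat_mult)
      also have "\<dots> \<le> K ^ l * ((t / 2) * a ^ 2 + b ^ 2 / (2 * t))"
      proof -
        have "a * b \<le> (t / 2) * a ^ 2 + b ^ 2 / (4 * (t / 2))" by (rule amgm) (use t0 in simp)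
        then show ?thesis using K by (intro mult_left_mono) auto
      qed
      also have "\<dots> \<le> G x"
      proof -
        have "a ^ 2 = exp (s1 * \<bar>u\<bar> / 2) * exp (s2 * \<bar>d\<bar> / 2)"
          by (simp add: a_def s1_def s2_def power2_eq_square exp_add[symmetric] algebra_simps)
        also have "\<dots> \<le> (1/2) * exp (s1 * \<bar>u\<bar> / 2) ^ 2 + exp (s2 * \<bar>d\<bar> / 2) ^ 2 / (4 * (1/2))"
          by (rule amgm) simp
        also have "\<dots> = (exp (s1 * \<bar>u\<bar>) + exp (s2 * \<bar>d\<bar>)) / 2"
          by (simp add: power2_eq_square exp_add[symmetric])
        finally have a2: "a ^ 2 \<le> (exp (s1 * \<bar>u\<bar>) + exp (s2 * \<bar>d\<bar>)) / 2" .
        have b2: "b ^ 2 = \<bar>d\<bar> ^ (2 * l)" by (simp add: b_def power_mult[symmetric] mult.commute)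
        have "(t / 2) * a ^ 2 \<le> (t / 2) * ((exp (s1 * \<bar>u\<bar>) + exp (s2 * \<bar>d\<bar>)) / 2)"
          by (rule mult_left_mono[OF a2]) (use t0 in simp)
        then show ?thesis using K unfolding G_def u_def[symmetric] d_def[symmetric] b2
          by (intro mult_left_mono) auto
      qed
      finally show ?thesis by (simp add: sum u_def X_def)
    qed
    have I1: "integrable M (\<lambda>x. exp (s1 * \<bar>X x\<bar>))" and E1: "integral\<^sup>L M (\<lambda>x. exp (s1 * \<bar>X x\<bar>)) \<le> 2 * exp (exp 1 * K ^ 2 * s1 ^ 2 * norm \<theta> ^ 2)"
      using eb[of s1 \<theta>] K by (auto simp: X_def s1_def)
    have I2: "integrable M (\<lambda>x. exp (s2 * \<bar>D x\<bar>))" and E2: "integral\<^sup>L M (\<lambda>x. exp (s2 * \<bar>D x\<bar>)) \<le> 2 * exp (exp 1 * K ^ 2 * s2 ^ 2 * norm \<Delta> ^ 2)"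
      using eb[of s2 \<Delta>] K by (auto simp: D_def s2_def)
    have I3: "integrable M (\<lambda>x. \<bar>D x\<bar> ^ (2 * l))" and E3: "integral\<^sup>L M (\<lambda>x. \<bar>D x\<bar> ^ (2 * l)) \<le> (K * nd * sqrt (real (2 * l))) ^ (2 * l)"
      using vm[of "2 * l" \<Delta>] l by (auto simp: D_def nd_def)
    have IG: "integrable M G" unfolding G_def using I1 I2 I3 by simp
    have IPhi: "integrable M (\<lambda>x. \<bar>f ((\<theta> + \<Delta>) \<bullet> W x) - f (\<theta> \<bullet> W x)\<bar> ^ l)"
      by (rule Bochner_Integration.integrable_bound[OF IG Phim]) (use pw in \<open>auto intro!: AE_I2 order.trans[OF _ abs_ge_self]\<close>)
    have "integral\<^sup>L M (\<lambda>x. \<bar>f ((\<theta> + \<Delta>) \<bullet> W x) - f (\<theta> \<bullet> W x)\<bar> ^ l) \<le> integral\<^sup>L M G"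
      by (rule integral_mono[OF IPhi IG pw])
    also have "integral\<^sup>L M G \<le> t * C"
    proof -
      define A0 where "A0 = 2 * exp (64 * exp 1 * K ^ 4 * (real l) ^ 2 * (norm \<theta> ^ 2 + norm \<Delta> ^ 2))"
      have eG: "integral\<^sup>L M G = K ^ l * ((t / 2) * ((integral\<^sup>L M (\<lambda>x. exp (s1 * \<bar>X x\<bar>)) + integral\<^sup>L M (\<lambda>x. exp (s2 * \<bar>D x\<bar>))) / 2)
          + integral\<^sup>L M (\<lambda>x. \<bar>D x\<bar> ^ (2 * l)) / (2 * t))"
        unfolding G_def using I1 I2 I3 by simp
      have E1': "integral\<^sup>L M (\<lambda>x. exp (s1 * \<bar>X x\<bar>)) \<le> A0"
      proof -
        have "exp 1 * K ^ 2 * s1 ^ 2 * norm \<theta> ^ 2 \<le> 64 * exp 1 * K ^ 4 * (real l) ^ 2 * (norm \<theta> ^ 2 + norm \<Delta> ^ 2)"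
        proof -
          have "exp 1 * K ^ 2 * s1 ^ 2 * norm \<theta> ^ 2 = 64 * exp 1 * K ^ 4 * (real l) ^ 2 * norm \<theta> ^ 2"
            by (simp add: s1_def power2_eq_square power4_eq_xxxx)
          also have "\<dots> \<le> 64 * exp 1 * K ^ 4 * (real l) ^ 2 * (norm \<theta> ^ 2 + norm \<Delta> ^ 2)"
            by (intro mult_left_mono) auto
          finally show ?thesis .
        qed
        then have "2 * exp (exp 1 * K ^ 2 * s1 ^ 2 * norm \<theta> ^ 2) \<le> A0"
          unfolding A0_def by simp
        then show ?thesis using E1 by linarith
      qed
      have E2': "integral\<^sup>L M (\<lambda>x. exp (s2 * \<bar>D x\<bar>)) \<le> A0"
      proof -
        have "exp 1 * K ^ 2 * s2 ^ 2 * norm \<Delta> ^ 2 \<le> 64 * exp 1 * K ^ 4 * (real l) ^ 2 * (norm \<theta> ^ 2 + norm \<Delta> ^ 2)"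
        proof -
          have "exp 1 * K ^ 2 * s2 ^ 2 * norm \<Delta> ^ 2 = 16 * (exp 1 * K ^ 4 * (real l) ^ 2 * norm \<Delta> ^ 2)"
            by (simp add: s2_def power2_eq_square power4_eq_xxxx)
          also have "\<dots> \<le> 64 * (exp 1 * K ^ 4 * (real l) ^ 2 * norm \<Delta> ^ 2)"
            by (intro mult_right_mono) auto
          also have "\<dots> \<le> 64 * exp 1 * K ^ 4 * (real l) ^ 2 * (norm \<theta> ^ 2 + norm \<Delta> ^ 2)"
            by (simp add: algebra_simps)
          finally show ?thesis .
        qed
        then have "2 * exp (exp 1 * K ^ 2 * s2 ^ 2 * norm \<Delta> ^ 2) \<le> A0"
          unfolding A0_def by simp
        then show ?thesis using E2 by linarith
      qed
      have E3': "integral\<^sup>L M (\<lambda>x. \<bar>D x\<bar> ^ (2 * l)) \<le> K ^ (2 * l) * t ^ 2 * (2 * real l) ^ l"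
      proof -
        have sq2: "sqrt (real (2 * l)) ^ (2 * l) = (2 * real l) ^ l"
          by (simp only: power_mult) simp
        have n2: "nd ^ (2 * l) = t ^ 2"
          by (simp only: t_def power_mult[symmetric] mult.commute)
        have "(K * nd * sqrt (real (2 * l))) ^ (2 * l) = K ^ (2 * l) * nd ^ (2 * l) * sqrt (real (2 * l)) ^ (2 * l)"
          by (simp only: power_mult_distrib)
        also have "\<dots> = K ^ (2 * l) * t ^ 2 * (2 * real l) ^ l" by (simp only: sq2 n2)
        finally show ?thesis using E3 by simp
      qed
      have "integral\<^sup>L M G \<le> K ^ l * ((t / 2) * ((A0 + A0) / 2) + (K ^ (2 * l) * t ^ 2 * (2 * real l) ^ l) / (2 * t))"
        unfolding eG using t0 K E1' E2' E3'
        by (intro mult_left_mono add_mono divide_right_mono) auto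
      also have "\<dots> = t * (K ^ l * (A0 + K ^ (2 * l) * (2 * real l) ^ l) / 2)"
        using t0 by (simp add: field_simps power2_eq_square)
      also have "K ^ l * (A0 + K ^ (2 * l) * (2 * real l) ^ l) / 2 = C"
      proof -
        have "K powr real l = K ^ l" using K by (rule powr_realpow)
        moreover have "K powr (2 * real l) = K ^ (2 * l)" using K powr_realpow[OF K, of "2 * l"] by simp
        moreover have "(2 * real l) powr real l = (2 * real l) ^ l" using l by (intro powr_realpow) simp
        ultimately show ?thesis by (simp add: C_def A0_def)
      qed
      finally show ?thesis .
    qed
    finally have EP: "integral\<^sup>L M (\<lambda>x. \<bar>f ((\<theta> + \<Delta>) \<bullet> W x) - f (\<theta> \<bullet> W x)\<bar> ^ l) \<le> t * C" .
    have EP0: "0 \<le> integral\<^sup>L M (\<lambda>x. \<bar>f ((\<theta> + \<Delta>) \<bullet> W x) - f (\<theta> \<bullet> W x)\<bar> ^ l)"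
      by (rule integral_nonneg_AE) auto
    have "(integral\<^sup>L M (\<lambda>x. \<bar>f ((\<theta> + \<Delta>) \<bullet> W x) - f (\<theta> \<bullet> W x)\<bar> ^ l)) powr (1 / real l) \<le> (t * C) powr (1 / real l)"
      by (rule powr_mono2[OF _ EP0 EP]) simp
    also have "\<dots> = nd * C powr (1 / real l)"
    proof -
      have "(t * C) powr (1 / real l) = t powr (1 / real l) * C powr (1 / real l)"
        using t0 C0 by (simp add: powr_mult)
      moreover have "t powr (1 / real l) = nd"
        using nd0 l by (simp add: t_def powr_realpow[symmetric] powr_powr)
      ultimately show ?thesis by simp
    qed
    also have "\<dots> \<le> C powr (1 / real l) / sqrt k * sqrt q"
    proof -
      have "k * nd ^ 2 \<le> q" using quad[of \<Delta>] by (simp add: nd_def q_def)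
      then have "sqrt (k * nd ^ 2) \<le> sqrt q" by (rule real_sqrt_le_mono)
      then have "sqrt k * nd \<le> sqrt q" using nd0 k0 by (simp add: real_sqrt_mult)
      then have "nd \<le> sqrt q / sqrt k" using k0 by (simp add: field_simps)
      then have "nd * C powr (1 / real l) \<le> sqrt q / sqrt k * C powr (1 / real l)"
        by (rule mult_right_mono) simp
      then show ?thesis by (simp add: field_simps)
    qed
    finally show ?thesis using IPhi by (simp add: C_def q_def)
  qed
qed


theorem lemma12:
  fixes M :: "'a measure" and W :: "'a \<Rightarrow> real ^ 'p"
    and f :: "real \<Rightarrow> real" and k K :: real
  assumes "prob_space M"
    and "W \<in> borel_measurable M"
    and "k > 0" and "K > 0"
    and "k \<le> lambda_min (second_moment M W)"
    and "(SUP \<Delta>\<in>{\<Delta>. norm \<Delta> = 1}. psi2_norm M (\<lambda>x. \<Delta> \<bullet> W x)) \<le> ereal K"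
    and "\<And>u v. \<bar>f u - f v\<bar> \<le> K * exp (K * (\<bar>u\<bar> + \<bar>v\<bar>)) * \<bar>u - v\<bar>"
  shows "\<exists>B1 :: real \<Rightarrow> real \<Rightarrow> real \<Rightarrow> real \<Rightarrow> real \<Rightarrow> real.
    (\<forall>a b c d e. 0 \<le> a \<longrightarrow> 0 \<le> b \<longrightarrow> 0 \<le> c \<longrightarrow> 0 \<le> d \<longrightarrow> 0 \<le> e \<longrightarrow>
        0 \<le> B1 a b c d e) \<and>
    (\<forall>a a' b c d e. 0 \<le> a \<longrightarrow> a \<le> a' \<longrightarrow> 0 \<le> b \<longrightarrow> 0 \<le> c \<longrightarrow> 0 \<le> d \<longrightarrow> 0 \<le> e \<longrightarrow>
        B1 a b c d e \<le> B1 a' b c d e) \<and>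
    (\<forall>a b b' c d e. 0 \<le> a \<longrightarrow> 0 \<le> b \<longrightarrow> b \<le> b' \<longrightarrow> 0 \<le> c \<longrightarrow> 0 \<le> d \<longrightarrow> 0 \<le> e \<longrightarrow>
        B1 a b c d e \<le> B1 a b' c d e) \<and>
    (\<forall>l::nat. \<forall>\<theta> \<Delta> :: real ^ 'p. l \<ge> 1 \<longrightarrow>
        integrable M (\<lambda>x. \<bar>f ((\<theta> + \<Delta>) \<bullet> W x) - f (\<theta> \<bullet> W x)\<bar> ^ l) \<and>
        (integral\<^sup>L M (\<lambda>x. \<bar>f ((\<theta> + \<Delta>) \<bullet> W x) - f (\<theta> \<bullet> W x)\<bar> ^ l)) powr (1 / real l)
          \<le> B1 (norm \<theta>) (norm \<Delta>) (real l) k K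
             * sqrt (integral\<^sup>L M (\<lambda>x. (W x \<bullet> \<Delta>)\<^sup>2)))"
proof -
  interpret prob_space M by (rule assms(1))
  note Wm = assms(2) and k0 = assms(3) and K = assms(4) and kl = assms(5) and L = assms(7)
  have momu: "integrable M (\<lambda>x. \<bar>u \<bullet> W x\<bar> ^ m) \<and>
        integral\<^sup>L M (\<lambda>x. \<bar>u \<bullet> W x\<bar> ^ m) \<le> (K * sqrt (real m)) ^ m"
    if "norm u = 1" "m \<ge> 1" for u :: "real ^ 'p" and m
  proof (rule psi2_mom[OF _ that(2)])
    have "psi2_norm M (\<lambda>x. u \<bullet> W x) \<le> (SUP \<Delta>\<in>{\<Delta>. norm \<Delta> = 1}. psi2_norm M (\<lambda>x. \<Delta> \<bullet> W x))"
      by (rule SUP_upper) (use that in simp)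
    then show "psi2_norm M (\<lambda>x. u \<bullet> W x) \<le> ereal K" using assms(6) by (rule order.trans)
  qed
  have vm: "integrable M (\<lambda>x. \<bar>v \<bullet> W x\<bar> ^ m) \<and>
        integral\<^sup>L M (\<lambda>x. \<bar>v \<bullet> W x\<bar> ^ m) \<le> (K * norm v * sqrt (real m)) ^ m"
    if "m \<ge> 1" for v :: "real ^ 'p" and m
    by (rule vec_mom[OF assms(1) momu that K])
  have eb: "integrable M (\<lambda>x. exp (s * \<bar>v \<bullet> W x\<bar>)) \<and>
        integral\<^sup>L M (\<lambda>x. exp (s * \<bar>v \<bullet> W x\<bar>)) \<le> 2 * exp (exp 1 * K ^ 2 * s ^ 2 * norm v ^ 2)"
    if "s \<ge> 0" for v :: "real ^ 'p" and s
    by (rule exp_abs_bound[OF assms(1) Wm momu K that])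
  have sq: "integrable M (\<lambda>x. (v \<bullet> W x) ^ 2)" for v :: "real ^ 'p"
    using vm[of 2 v] by simp
  have quad: "k * norm v ^ 2 \<le> integral\<^sup>L M (\<lambda>x. (W x \<bullet> v) ^ 2)" for v :: "real ^ 'p"
  proof -
    have "k * norm v ^ 2 \<le> v \<bullet> (second_moment M W *v v)"
      by (rule min_eig[OF second_moment_quad(2)[OF assms(1) Wm sq] kl])
    then show ?thesis using second_moment_quad(1)[OF assms(1) Wm sq] by simp
  qed
  have fm: "f \<in> borel_measurable borel"
    by (rule borel_measurable_continuous_onI, rule continuous_at_imp_continuous_on)
      (use f_cont[OF K L] in blast)
  define B1 :: "real \<Rightarrow> real \<Rightarrow> real \<Rightarrow> real \<Rightarrow> real \<Rightarrow> real" where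
    "B1 a b c d e = (e powr c * (2 * exp (64 * exp 1 * e ^ 4 * c ^ 2 * (a ^ 2 + b ^ 2))
        + e powr (2 * c) * (2 * c) powr c) / 2) powr (1 / c) / sqrt d" for a b c d e
  have base_mono: "e powr c * (2 * exp (64 * exp 1 * e ^ 4 * c ^ 2 * (a ^ 2 + b ^ 2))
        + e powr (2 * c) * (2 * c) powr c) / 2
      \<le> e powr c * (2 * exp (64 * exp 1 * e ^ 4 * c ^ 2 * (a' ^ 2 + b' ^ 2))
        + e powr (2 * c) * (2 * c) powr c) / 2"
    if "0 \<le> a" "a \<le> a'" "0 \<le> b" "b \<le> b'" for a a' b b' c e :: real
  proof -
    have "a ^ 2 + b ^ 2 \<le> a' ^ 2 + b' ^ 2" using that by (intro add_mono power_mono) auto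
    then have "64 * exp 1 * e ^ 4 * c ^ 2 * (a ^ 2 + b ^ 2) \<le> 64 * exp 1 * e ^ 4 * c ^ 2 * (a' ^ 2 + b' ^ 2)"
      by (intro mult_left_mono) auto
    then show ?thesis by (intro divide_right_mono add_right_mono mult_left_mono) auto
  qed
  have base_nn: "0 \<le> e powr c * (2 * exp (64 * exp 1 * e ^ 4 * c ^ 2 * (a ^ 2 + b ^ 2))
        + e powr (2 * c) * (2 * c) powr c) / 2" for a b c e :: real
    by simp
  have B1mono: "B1 a b c d e \<le> B1 a' b' c d e"
    if "0 \<le> a" "a \<le> a'" "0 \<le> b" "b \<le> b'" "0 \<le> c" "0 \<le> d" for a a' b b' c d e :: real
    unfolding B1_def
    by (rule divide_right_mono[OF powr_mono2[OF _ base_nn base_mono]]) (use that in auto)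
  show ?thesis
  proof (intro exI[of _ B1] conjI allI impI)
    fix a b c d e :: real
    assume "0 \<le> a" "0 \<le> b" "0 \<le> c" "0 \<le> d" "0 \<le> e"
    then show "0 \<le> B1 a b c d e" by (simp add: B1_def)
  next
    fix a a' b c d e :: real
    assume "0 \<le> a" "a \<le> a'" "0 \<le> b" "0 \<le> c" "0 \<le> d" "0 \<le> e"
    then show "B1 a b c d e \<le> B1 a' b c d e" by (intro B1mono) auto
  next
    fix a b b' c d e :: real
    assume "0 \<le> a" "0 \<le> b" "b \<le> b'" "0 \<le> c" "0 \<le> d" "0 \<le> e"
    then show "B1 a b c d e \<le> B1 a b' c d e" by (intro B1mono) auto
  next
    fix l :: nat and \<theta> \<Delta> :: "real ^ 'p"
    assume l: "1 \<le> l"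
    show "integrable M (\<lambda>x. \<bar>f ((\<theta> + \<Delta>) \<bullet> W x) - f (\<theta> \<bullet> W x)\<bar> ^ l)"
      by (rule conjunct1[OF core[OF assms(1) Wm K k0 L vm eb quad fm l]])
  next
    fix l :: nat and \<theta> \<Delta> :: "real ^ 'p"
    assume l: "1 \<le> l"
    show "(integral\<^sup>L M (\<lambda>x. \<bar>f ((\<theta> + \<Delta>) \<bullet> W x) - f (\<theta> \<bullet> W x)\<bar> ^ l)) powr (1 / real l)
          \<le> B1 (norm \<theta>) (norm \<Delta>) (real l) k K * sqrt (integral\<^sup>L M (\<lambda>x. (W x \<bullet> \<Delta>)\<^sup>2))"
      unfolding B1_def by (rule conjunct2[OF core[OF assms(1) Wm K k0 L vm eb quad fm l]])
  qed
qed

end
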